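(* Let $G=K^{n_{1},n_{2},\ldots,n_{k}}_{n}$ where $k\geq 2$, $n_i\ge1$ and $n=\sum_{i=1}^{k}n_{i}+1$. Then the distance characteristic polynomial of $G$ is $$P_{D}(\lambda)=\det(\lambda I-D(G))=(\lambda+1)^{n-k-1}\Big(\lambda-\sum_{i=1}^{k}\frac{n_{i}(2\lambda+1)}{\lambda+n_{i}+1}\Big)\prod_{i=1}^{k}(\lambda+n_{i}+1).$$
   Context: $D(G)$ is the distance matrix of $G$. $K^{n_{1},\ldots,n_{k}}_{n}$ denotes the graph on $n$ vertices having a vertex $v$ of degree $n-1$ such that $G-v$ is the disjoint union of complete graphs $K_{n_1},\dots,K_{n_k}$. *)

theory Defs
  imports "Jordan_Normal_Form.Determinant"
begin

definition is_walk :: "(nat \<Rightarrow> nat \<Rightarrow> bool) \<Rightarrow> nat list \<Rightarrow> bool" where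
  "is_walk E xs \<longleftrightarrow> xs \<noteq> [] \<and> (\<forall>i. Suc i < length xs \<longrightarrow> E (xs ! i) (xs ! Suc i))"

definition graph_dist :: "(nat \<Rightarrow> nat \<Rightarrow> bool) \<Rightarrow> nat \<Rightarrow> nat \<Rightarrow> nat" where
  "graph_dist E x y = (LEAST m. \<exists>xs. is_walk E xs \<and> hd xs = x \<and> last xs = y \<and> length xs = Suc m)"

definition distance_matrix :: "(nat \<Rightarrow> nat \<Rightarrow> bool) \<Rightarrow> nat \<Rightarrow> real mat" where
  "distance_matrix E n = mat n n (\<lambda>(i, j). real (graph_dist E i j))"

definition simple_graph_on :: "nat \<Rightarrow> (nat \<Rightarrow> nat \<Rightarrow> bool) \<Rightarrow> bool" where
  "simple_graph_on n E \<longleftrightarrow> (\<forall>x y. E x y \<longrightarrow> x < n \<and> y < n \<and> x \<noteq> y \<and> E y x)"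

definition is_K_graph :: "nat \<Rightarrow> nat \<Rightarrow> (nat \<Rightarrow> nat) \<Rightarrow> (nat \<Rightarrow> nat \<Rightarrow> bool) \<Rightarrow> bool" where
  "is_K_graph n k ns E \<longleftrightarrow> simple_graph_on n E \<and>
     (\<exists>v<n. (\<forall>u<n. u \<noteq> v \<longrightarrow> E v u) \<and>
       (\<exists>C :: nat \<Rightarrow> nat set.
          (\<forall>i\<in>{1..k}. C i \<subseteq> {0..<n} - {v} \<and> card (C i) = ns i) \<and>
          (\<forall>i\<in>{1..k}. \<forall>j\<in>{1..k}. i \<noteq> j \<longrightarrow> C i \<inter> C j = {}) \<and>
          (\<Union>i\<in>{1..k}. C i) = {0..<n} - {v} \<and>
          (\<forall>x\<in>{0..<n} - {v}. \<forall>y\<in>{0..<n} - {v}. x \<noteq> y \<longrightarrow>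
              (E x y \<longleftrightarrow> (\<exists>i\<in>{1..k}. x \<in> C i \<and> y \<in> C i)))))"

end

theory Submission
  imports Defs
begin

lemma sylvA:
  fixes A B U W :: "real mat"
  assumes A: "A \<in> carrier_mat n n" and B: "B \<in> carrier_mat n n" and AB: "A * B = 1\<^sub>m n"
    and U: "U \<in> carrier_mat n r" and W: "W \<in> carrier_mat r n"
  shows "det (A + U * W) = det A * det (1\<^sub>m r + W * B * U)"
proof -
  define M where "M = four_block_mat A (- U) W (1\<^sub>m r)"
  define L where "L = four_block_mat (1\<^sub>m n) U (0\<^sub>m r n) (1\<^sub>m r)"
  define R where "R = four_block_mat (1\<^sub>m n) (B * U) (0\<^sub>m r n) (1\<^sub>m r)"
  have Mc: "M \<in> carrier_mat (n+r) (n+r)" unfolding M_def using A U W by auto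
  have Lc: "L \<in> carrier_mat (n+r) (n+r)" unfolding L_def using U by auto
  have Rc: "R \<in> carrier_mat (n+r) (n+r)" unfolding R_def using B U by auto
  have dL: "det L = 1" unfolding L_def
    by (subst det_four_block_mat_lower_left_zero[of _ n _ r], insert U, auto)
  have dR: "det R = 1" unfolding R_def
    by (subst det_four_block_mat_lower_left_zero[of _ n _ r], insert B U, auto)
  have "L * M = four_block_mat (1\<^sub>m n * A + U * W) (1\<^sub>m n * (- U) + U * 1\<^sub>m r)
      (0\<^sub>m r n * A + 1\<^sub>m r * W) (0\<^sub>m r n * (- U) + 1\<^sub>m r * 1\<^sub>m r)"
    unfolding L_def M_def by (rule mult_four_block_mat, insert A U W, auto)
  also have "\<dots> = four_block_mat (A + U * W) (0\<^sub>m n r) W (1\<^sub>m r)"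
    using A U W by auto
  finally have LM: "L * M = four_block_mat (A + U * W) (0\<^sub>m n r) W (1\<^sub>m r)" .
  have "det (L * M) = det (A + U * W)"
    unfolding LM by (subst det_four_block_mat_upper_right_zero[of _ n _ r], insert A U W, auto)
  hence d1: "det M = det (A + U * W)" using det_mult[OF Lc Mc] dL by simp
  have "M * R = four_block_mat (A * 1\<^sub>m n + (- U) * 0\<^sub>m r n) (A * (B * U) + (- U) * 1\<^sub>m r)
      (W * 1\<^sub>m n + 1\<^sub>m r * 0\<^sub>m r n) (W * (B * U) + 1\<^sub>m r * 1\<^sub>m r)"
    unfolding R_def M_def by (rule mult_four_block_mat, insert A B U W, auto)
  also have "\<dots> = four_block_mat A (0\<^sub>m n r) W (1\<^sub>m r + W * B * U)"
  proof -
    have "A * (B * U) = U" using A B U AB by (metis assoc_mult_mat left_mult_one_mat)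
    moreover have "W * (B * U) = W * B * U" using W B U by (simp add: assoc_mult_mat)
    ultimately show ?thesis using A B U W by (auto simp: comm_add_mat[of _ r r])
  qed
  finally have MR: "M * R = four_block_mat A (0\<^sub>m n r) W (1\<^sub>m r + W * B * U)" .
  have "det (M * R) = det A * det (1\<^sub>m r + W * B * U)"
    unfolding MR by (subst det_four_block_mat_upper_right_zero[of _ n _ r], insert A B U W, auto)
  hence "det M = det A * det (1\<^sub>m r + W * B * U)" using det_mult[OF Mc Rc] dR by simp
  with d1 show ?thesis by simp
qed

lemma det_zero_last_row:
  fixes A :: "real mat"
  assumes A: "A \<in> carrier_mat n n" and i: "i < n" and z: "\<And>j. j < n \<Longrightarrow> A $$ (i, j) = 0"
  shows "det A = 0"
  using laplace_expansion_row[OF A i] z by simp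

lemma sylvB:
  fixes U W :: "real mat" and mu :: real
  assumes U: "U \<in> carrier_mat n r" and W: "W \<in> carrier_mat r n" and rn: "r \<le> n"
  shows "det (mu \<cdot>\<^sub>m 1\<^sub>m n + U * W) = mu ^ (n - r) * det (mu \<cdot>\<^sub>m 1\<^sub>m r + W * U)"
proof (cases "mu = 0")
  case False
  define B where "B = (1 / mu) \<cdot>\<^sub>m 1\<^sub>m n"
  have B: "B \<in> carrier_mat n n" unfolding B_def by auto
  have AB: "(mu \<cdot>\<^sub>m 1\<^sub>m n) * B = 1\<^sub>m n" unfolding B_def using False
    by (auto simp: mult_smult_assoc_mat mult_smult_distrib)
  have s1: "det (mu \<cdot>\<^sub>m 1\<^sub>m n + U * W) = det (mu \<cdot>\<^sub>m 1\<^sub>m n) * det (1\<^sub>m r + W * B * U)"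
    by (rule sylvA[OF _ B AB U W], auto)
  have s2: "W * B * U = (1 / mu) \<cdot>\<^sub>m (W * U)"
  proof -
    have "W * B = (1 / mu) \<cdot>\<^sub>m W" unfolding B_def
      using mult_smult_distrib[OF W, of "1\<^sub>m n" n "1/mu"] W by simp
    thus ?thesis using mult_smult_assoc_mat[OF W U] by simp
  qed
  have s3: "det (mu \<cdot>\<^sub>m 1\<^sub>m r + W * U) = mu ^ r * det (1\<^sub>m r + (1 / mu) \<cdot>\<^sub>m (W * U))"
  proof -
    have "mu \<cdot>\<^sub>m 1\<^sub>m r + W * U = mu \<cdot>\<^sub>m (1\<^sub>m r + (1 / mu) \<cdot>\<^sub>m (W * U))"
      using U W False by (intro eq_matI, auto simp: field_simps)
    thus ?thesis using U W by simp
  qed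
  show ?thesis using False rn unfolding s1 s2 s3
    by (simp add: power_diff)
next
  case True
  have e1: "0 \<cdot>\<^sub>m 1\<^sub>m m + X = X" if "X \<in> carrier_mat m m" for X :: "real mat" and m
    using that by (intro eq_matI, auto)
  show ?thesis
  proof (cases "r = n")
    case True
    thus ?thesis using \<open>mu = 0\<close> U W e1[of "U * W" n] e1[of "W * U" n] by (simp add: det_mult[of _ n])
  next
    case False
    define U' where "U' = mat n n (\<lambda>(i,j). if j < r then U $$ (i,j) else 0)"
    define W' where "W' = mat n n (\<lambda>(i,j). if i < r then W $$ (i,j) else 0)"
    have "U * W = U' * W'"
    proof (rule eq_matI)
      fix i j assume i: "i < dim_row (U' * W')" and j: "j < dim_col (U' * W')"
      have "(U' * W') $$ (i,j) = (\<Sum>t<n. U' $$ (i,t) * W' $$ (t,j))"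
        using i j unfolding U'_def W'_def by (auto simp: scalar_prod_def atLeast0LessThan)
      also have "\<dots> = (\<Sum>t<r. U $$ (i,t) * W $$ (t,j))"
      proof -
        have "(\<Sum>t<n. U' $$ (i,t) * W' $$ (t,j)) = (\<Sum>t\<in>{..<n}. if t < r then U $$ (i,t) * W $$ (t,j) else 0)"
          using i j unfolding U'_def W'_def by (intro sum.cong, auto)
        also have "\<dots> = (\<Sum>t\<in>{..<n} \<inter> {t. t < r}. U $$ (i,t) * W $$ (t,j))"
          by (simp add: sum.inter_restrict)
        also have "{..<n} \<inter> {t. t < r} = {..<r}" using rn by auto
        finally show ?thesis .
      qed
      also have "\<dots> = (U * W) $$ (i,j)"
        using i j U W unfolding U'_def W'_def by (auto simp: scalar_prod_def atLeast0LessThan)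
      finally show "(U * W) $$ (i, j) = (U' * W') $$ (i, j)" by simp
    qed (insert U W, auto simp: U'_def W'_def)
    moreover have "det W' = 0"
      by (rule det_zero_last_row[of _ n "n - 1"], insert rn False, auto simp: W'_def)
    ultimately have "det (U * W) = 0"
      by (simp add: det_mult[of _ n] U'_def W'_def)
    thus ?thesis using \<open>mu = 0\<close> U W e1[of "U * W" n] rn False by simp
  qed
qed

lemma walk_len1: "length xs = Suc 0 \<Longrightarrow> hd xs = last xs"
  by (cases xs, auto)

lemma walk_len2: "is_walk E xs \<Longrightarrow> length xs = Suc (Suc 0) \<Longrightarrow> E (hd xs) (last xs)"
  unfolding is_walk_def
  by (cases xs; cases "tl xs"; auto; metis One_nat_def lessI nth_Cons_0 nth_Cons_Suc)

lemma gd0: "graph_dist E x x = 0"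
  unfolding graph_dist_def
  by (rule Least_equality, rule exI[of _ "[x]"], auto simp: is_walk_def)

lemma gd1: assumes "x \<noteq> y" "E x y" shows "graph_dist E x y = 1"
  unfolding graph_dist_def
proof (rule Least_equality)
  show "\<exists>xs. is_walk E xs \<and> hd xs = x \<and> last xs = y \<and> length xs = Suc 1"
    by (rule exI[of _ "[x,y]"], insert assms, auto simp: is_walk_def less_Suc_eq)
  fix m assume "\<exists>xs. is_walk E xs \<and> hd xs = x \<and> last xs = y \<and> length xs = Suc m"
  then obtain xs where "is_walk E xs" "hd xs = x" "last xs = y" "length xs = Suc m" by blast
  thus "1 \<le> m" using walk_len1[of xs] assms by (cases m, auto)
qed

lemma gd2: assumes "x \<noteq> y" "\<not> E x y" "E x w" "E w y" shows "graph_dist E x y = 2"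
  unfolding graph_dist_def
proof (rule Least_equality)
  show "\<exists>xs. is_walk E xs \<and> hd xs = x \<and> last xs = y \<and> length xs = Suc 2"
    by (rule exI[of _ "[x,w,y]"], insert assms, auto simp: is_walk_def less_Suc_eq nth_Cons')
  fix m assume "\<exists>xs. is_walk E xs \<and> hd xs = x \<and> last xs = y \<and> length xs = Suc m"
  then obtain xs where "is_walk E xs" "hd xs = x" "last xs = y" "length xs = Suc m" by blast
  thus "2 \<le> m" using walk_len1[of xs] walk_len2[of E xs] assms
    by (cases m; cases "m - 1"; auto)
qed

lemma det2: assumes A: "(A :: real mat) \<in> carrier_mat 2 2"
  shows "det A = A $$ (0,0) * A $$ (1,1) - A $$ (0,1) * A $$ (1,0)"
  using laplace_expansion_row[OF A, of 0] A
  by (simp add: cofactor_def det_single mat_delete_def numeral_2_eq_2 lessThan_Suc)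

lemma det_diag: "det (mat m m (\<lambda>(i,j). if i = j then f i else 0) :: real mat) = (\<Prod>i<m. f i)"
  by (subst det_upper_triangular[of _ m], auto simp: diag_mat_def prod.list_conv_set_nth atLeast0LessThan)


lemma sum_shift1: "(\<Sum>s<k+1. f s) = f 0 + (\<Sum>i=1..k. f i)" for f :: "nat \<Rightarrow> real"
  by (induction k) (auto simp: add.assoc)

lemma prod_shift1: "(\<Prod>s<k+1. f s) = f 0 * (\<Prod>i=1..k. f i)" for f :: "nat \<Rightarrow> real"
  by (induction k) (auto simp: mult.assoc)

lemma sum_shift1': "(\<Sum>s<Suc k. f s) = f 0 + (\<Sum>i=1..k. f i)" for f :: "nat \<Rightarrow> real"
  by (induction k) (auto simp: add.assoc)

theorem lemma3p4:
  fixes n k :: nat and ns :: "nat \<Rightarrow> nat" and E :: "nat \<Rightarrow> nat \<Rightarrow> bool" and lam :: real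
  assumes "k \<ge> 2"
    and "\<forall>i\<in>{1..k}. ns i \<ge> 1"
    and "n = (\<Sum>i=1..k. ns i) + 1"
    and "is_K_graph n k ns E"
    and "\<forall>i\<in>{1..k}. lam + real (ns i) + 1 \<noteq> 0"
  shows "det (lam \<cdot>\<^sub>m 1\<^sub>m n - distance_matrix E n) =
     (lam + 1) ^ (n - k - 1)
     * (lam - (\<Sum>i=1..k. real (ns i) * (2 * lam + 1) / (lam + real (ns i) + 1)))
     * (\<Prod>i=1..k. (lam + real (ns i) + 1))"
proof -
  note K = assms(4)[unfolded is_K_graph_def]
  have sg: "simple_graph_on n E" using K by blast
  from K obtain v C where vn: "v < n" and vadj: "\<forall>u<n. u \<noteq> v \<longrightarrow> E v u"
    and Csub: "\<forall>i\<in>{1..k}. C i \<subseteq> {0..<n} - {v} \<and> card (C i) = ns i"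
    and Cdisj: "\<forall>i\<in>{1..k}. \<forall>j\<in>{1..k}. i \<noteq> j \<longrightarrow> C i \<inter> C j = {}"
    and Cun: "(\<Union>i\<in>{1..k}. C i) = {0..<n} - {v}"
    and Cadj: "\<forall>x\<in>{0..<n} - {v}. \<forall>y\<in>{0..<n} - {v}. x \<noteq> y \<longrightarrow>
              (E x y \<longleftrightarrow> (\<exists>i\<in>{1..k}. x \<in> C i \<and> y \<in> C i))"
    using K by (elim conjE exE) (rule that)
  have Esym: "E x y \<Longrightarrow> E y x" for x y using sg unfolding simple_graph_on_def by blast
  define g where "g x = (if x = v then 0 else (THE i. i \<in> {1..k} \<and> x \<in> C i))" for x
  have guniq: "i \<in> {1..k} \<Longrightarrow> x \<in> C i \<Longrightarrow> g x = i" for i x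
  proof -
    assume i: "i \<in> {1..k}" and x: "x \<in> C i"
    have "x \<noteq> v" using Csub i x by auto
    moreover have "(THE i. i \<in> {1..k} \<and> x \<in> C i) = i"
    proof (rule the_equality)
      show "i \<in> {1..k} \<and> x \<in> C i" using i x by simp
      fix j assume "j \<in> {1..k} \<and> x \<in> C j"
      thus "j = i" using Cdisj i x by blast
    qed
    ultimately show ?thesis unfolding g_def by simp
  qed
  have gex: "x < n \<Longrightarrow> x \<noteq> v \<Longrightarrow> g x \<in> {1..k} \<and> x \<in> C (g x)" for x
  proof -
    assume "x < n" "x \<noteq> v"
    hence "x \<in> (\<Union>i\<in>{1..k}. C i)" unfolding Cun by auto
    then obtain i where "i \<in> {1..k}" "x \<in> C i" by blast
    thus ?thesis using guniq by auto
  qed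
  have gv: "g v = 0" unfolding g_def by simp
  have vC: "i \<in> {1..k} \<Longrightarrow> v \<notin> C i" for i using Csub by auto
  have Cn: "i \<in> {1..k} \<Longrightarrow> C i \<subseteq> {0..<n}" for i using Csub by auto
  have gk: "x < n \<Longrightarrow> g x < k + 1" for x using gex[of x] gv by (cases "x = v", auto)
  define mu where "mu = lam + 1"
  define U :: "real mat" where "U = mat n (k+1) (\<lambda>(x,t). if t = 0 then (if x = v then 1 else 0) else (if x \<in> C t then 1 else 0))"
  define W :: "real mat" where "W = mat (k+1) n (\<lambda>(t,y). if t = 0 then -1 else if y = v then -1 else if y \<in> C t then -1 else -2)"
  have Uc: "U \<in> carrier_mat n (k+1)" unfolding U_def by auto
  have Wc: "W \<in> carrier_mat (k+1) n" unfolding W_def by auto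
  have Ug: "x < n \<Longrightarrow> t < k + 1 \<Longrightarrow> U $$ (x,t) = (if t = g x then 1 else 0)" for x t
  proof -
    assume x: "x < n" and t: "t < k + 1"
    show ?thesis
    proof (cases "x = v")
      case True thus ?thesis using x t vC gv unfolding U_def by auto
    next
      case False
      note gx = gex[OF x False]
      show ?thesis
      proof (cases "t = 0")
        case True thus ?thesis using x t gx False unfolding U_def by auto
      next
        case f: False
        hence "t \<in> {1..k}" using t by auto
        hence "x \<in> C t \<longleftrightarrow> t = g x" using guniq[of t x] gx by auto
        thus ?thesis using x t f unfolding U_def by simp
      qed
    qed
  qed
  have UW: "(U * W) $$ (x,y) = W $$ (g x, y)" if x: "x < n" and y: "y < n" for x y
  proof -
    have "(U * W) $$ (x,y) = (\<Sum>t<k+1. U $$ (x,t) * W $$ (t,y))"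
      using x y Uc Wc by (auto simp: scalar_prod_def atLeast0LessThan)
    also have "\<dots> = (\<Sum>t<k+1. if t = g x then W $$ (g x, y) else 0)"
      by (intro sum.cong refl) (simp add: Ug[OF x])
    also have "\<dots> = W $$ (g x, y)" using gk[OF x] by simp
    finally show ?thesis .
  qed
  have dist: "lam \<cdot>\<^sub>m 1\<^sub>m n - distance_matrix E n = mu \<cdot>\<^sub>m 1\<^sub>m n + U * W"
  proof (rule eq_matI)
    fix x y assume "x < dim_row (mu \<cdot>\<^sub>m 1\<^sub>m n + U * W)" "y < dim_col (mu \<cdot>\<^sub>m 1\<^sub>m n + U * W)"
    hence x: "x < n" and y: "y < n" using Uc Wc by auto
    have lhs: "(lam \<cdot>\<^sub>m 1\<^sub>m n - distance_matrix E n) $$ (x,y) = (if x = y then lam else 0) - real (graph_dist E x y)"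
      using x y by (simp add: distance_matrix_def)
    have rhs: "(mu \<cdot>\<^sub>m 1\<^sub>m n + U * W) $$ (x,y) = (if x = y then mu else 0) + W $$ (g x, y)"
      using x y Uc Wc UW by simp
    have Wgy: "W $$ (g x, y) = (if x = y then -1 else - real (graph_dist E x y))"
    proof (cases "x = y")
      case True
      thus ?thesis using gex[OF x] gv gk[OF x] x unfolding W_def by (cases "x = v", auto)
    next
      case xy: False
      show ?thesis
      proof (cases "x = v")
        case True
        have "graph_dist E x y = 1" using gd1[of x y E] True xy vadj y by auto
        thus ?thesis using True xy gv y unfolding W_def by auto
      next
        case xv: False
        note gx = gex[OF x xv]
        have gx0: "g x \<noteq> 0" using gx by auto
        show ?thesis
        proof (cases "y = v")
          case True
          have "graph_dist E x y = 1" using gd1[of x y E] True xy vadj x Esym by auto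
          thus ?thesis using True xy gx gk[OF x] gx0 y unfolding W_def by auto
        next
          case yv: False
          show ?thesis
          proof (cases "y \<in> C (g x)")
            case True
            have "E x y" using Cadj x y xv yv xy True gx by auto
            hence "graph_dist E x y = 1" using gd1[of x y E] xy by auto
            thus ?thesis using True xy gx gk[OF x] gx0 y yv unfolding W_def by auto
          next
            case False
            have "\<not> E x y"
            proof
              assume "E x y"
              then obtain i where "i \<in> {1..k}" "x \<in> C i" "y \<in> C i" using Cadj x y xv yv xy by auto
              thus False using guniq[of i x] False by auto
            qed
            hence "graph_dist E x y = 2" using gd2[of x y E v] xy vadj x y xv yv Esym by auto
            thus ?thesis using False xy gx gk[OF x] gx0 y yv unfolding W_def by auto
          qed
        qed
      qed
    qed
    show "(lam \<cdot>\<^sub>m 1\<^sub>m n - distance_matrix E n) $$ (x, y) = (mu \<cdot>\<^sub>m 1\<^sub>m n + U * W) $$ (x, y)"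
      unfolding lhs rhs Wgy by (auto simp: mu_def gd0)
  qed (insert Uc Wc, auto simp: distance_matrix_def)
  define WU :: "real mat" where "WU = mat (k+1) (k+1) (\<lambda>(t,s). if s = 0 then -1 else (if t = 0 \<or> t = s then -1 else -2) * real (ns s))"
  have WUeq: "W * U = WU"
  proof (rule eq_matI)
    fix t s assume "t < dim_row WU" "s < dim_col WU"
    hence t: "t < k + 1" and s: "s < k + 1" unfolding WU_def by auto
    have "(W * U) $$ (t,s) = (\<Sum>y<n. W $$ (t,y) * U $$ (y,s))"
      using t s Uc Wc by (auto simp: scalar_prod_def atLeast0LessThan)
    also have "\<dots> = WU $$ (t,s)"
    proof (cases "s = 0")
      case True
      have "(\<Sum>y<n. W $$ (t,y) * U $$ (y,s)) = (\<Sum>y<n. if y = v then W $$ (t,v) else 0)"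
        using True t unfolding U_def by (intro sum.cong, auto)
      also have "\<dots> = -1" using vn t unfolding W_def by auto
      finally show ?thesis using True t s unfolding WU_def by auto
    next
      case False
      hence si: "s \<in> {1..k}" using s by auto
      define cst :: real where "cst = (if t = 0 \<or> t = s then -1 else -2)"
      have "(\<Sum>y<n. W $$ (t,y) * U $$ (y,s)) = (\<Sum>y\<in>{..<n}. if y \<in> C s then cst else 0)"
      proof (intro sum.cong refl)
        fix y assume y: "y \<in> {..<n}"
        show "W $$ (t,y) * U $$ (y,s) = (if y \<in> C s then cst else 0)"
        proof (cases "y \<in> C s")
          case True
          have yv: "y \<noteq> v" using vC[OF si] True by auto
          have "y \<notin> C t" if t0: "t \<noteq> 0" and ts: "t \<noteq> s"
          proof -
            have "t \<in> {1..k}" using t t0 by auto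
            hence "C t \<inter> C s = {}" using Cdisj si ts by blast
            thus ?thesis using True by blast
          qed
          thus ?thesis using True yv y t s False unfolding W_def U_def cst_def by auto
        next
          case f: False thus ?thesis using y s False unfolding U_def by auto
        qed
      qed
      also have "\<dots> = (\<Sum>y\<in>{..<n} \<inter> C s. cst)" by (rule sum.inter_restrict[symmetric], simp)
      also have "{..<n} \<inter> C s = C s" using Cn[OF si] by auto
      also have "(\<Sum>y\<in>C s. cst) = real (ns s) * cst" using Csub si by simp
      finally show ?thesis using False t s unfolding WU_def cst_def by auto
    qed
    finally show "(W * U) $$ (t,s) = WU $$ (t,s)" .
  qed (insert Uc Wc, auto simp: WU_def)
  have kn: "k + 1 \<le> n"
  proof -
    have "(\<Sum>i=1..k. 1) \<le> (\<Sum>i=1..k. ns i)" using assms(2) by (intro sum_mono, auto)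
    thus ?thesis using assms(3) by simp
  qed
  have step1: "det (lam \<cdot>\<^sub>m 1\<^sub>m n - distance_matrix E n) = mu ^ (n - (k+1)) * det (mu \<cdot>\<^sub>m 1\<^sub>m (k+1) + WU)"
    unfolding dist using sylvB[OF Uc Wc kn, of mu] WUeq by simp
  define dd where "dd i = (if i = 0 then 1 else mu + real (ns i))" for i
  have dd0: "i < k + 1 \<Longrightarrow> dd i \<noteq> 0" for i
  proof -
    assume i: "i < k + 1"
    show "dd i \<noteq> 0"
    proof (cases "i = 0")
      case False
      hence "i \<in> {1..k}" using i by auto
      hence "lam + real (ns i) + 1 \<noteq> 0" using assms(5) by blast
      thus ?thesis using False unfolding dd_def mu_def by (simp add: algebra_simps)
    qed (simp add: dd_def)
  qed
  define Dl :: "real mat" where "Dl = mat (k+1) (k+1) (\<lambda>(i,j). if i = j then dd i else 0)"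
  define Bl :: "real mat" where "Bl = mat (k+1) (k+1) (\<lambda>(i,j). if i = j then 1 / dd i else 0)"
  define U2 :: "real mat" where "U2 = mat (k+1) 2 (\<lambda>(r,t). if t = 0 then 1 else if r = 0 then 1 else 0)"
  define W2 :: "real mat" where "W2 = mat 2 (k+1) (\<lambda>(t,s). if t = 0 then (if s = 0 then -1 else -2 * real (ns s)) else (if s = 0 then lam else real (ns s)))"
  have Dlc: "Dl \<in> carrier_mat (k+1) (k+1)" and Blc: "Bl \<in> carrier_mat (k+1) (k+1)"
    and U2c: "U2 \<in> carrier_mat (k+1) 2" and W2c: "W2 \<in> carrier_mat 2 (k+1)"
    unfolding Dl_def Bl_def U2_def W2_def by auto
  have DB: "Dl * Bl = 1\<^sub>m (k+1)"
  proof (rule eq_matI)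
    fix i j assume "i < dim_row (1\<^sub>m (k+1))" "j < dim_col (1\<^sub>m (k+1))"
    hence i: "i < k+1" and j: "j < k+1" by auto
    have "(Dl * Bl) $$ (i,j) = (\<Sum>t<k+1. Dl $$ (i,t) * Bl $$ (t,j))"
      using i j Dlc Blc by (auto simp: scalar_prod_def atLeast0LessThan)
    also have "\<dots> = (\<Sum>t<k+1. if t = i then (if i = j then 1 else 0) else 0)"
      using i j dd0 unfolding Dl_def Bl_def by (intro sum.cong, auto)
    also have "\<dots> = (if i = j then 1 else 0)" using i by simp
    finally show "(Dl * Bl) $$ (i,j) = 1\<^sub>m (k+1) $$ (i,j)" using i j by simp
  qed (insert Dlc Blc, auto)
  have Teq: "mu \<cdot>\<^sub>m 1\<^sub>m (k+1) + WU = Dl + U2 * W2"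
  proof (rule eq_matI)
    fix r s assume "r < dim_row (Dl + U2 * W2)" "s < dim_col (Dl + U2 * W2)"
    hence r: "r < k+1" and s: "s < k+1" using Dlc U2c W2c by auto
    have "(U2 * W2) $$ (r,s) = (\<Sum>t<2. U2 $$ (r,t) * W2 $$ (t,s))"
      using r s U2c W2c by (auto simp: scalar_prod_def atLeast0LessThan)
    also have "\<dots> = U2 $$ (r,0) * W2 $$ (0,s) + U2 $$ (r,1) * W2 $$ (1,s)"
      by (simp add: numeral_2_eq_2)
    finally have e: "(U2 * W2) $$ (r,s) = U2 $$ (r,0) * W2 $$ (0,s) + U2 $$ (r,1) * W2 $$ (1,s)" .
    show "(mu \<cdot>\<^sub>m 1\<^sub>m (k+1) + WU) $$ (r,s) = (Dl + U2 * W2) $$ (r,s)"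
    proof -
      have rhs: "(Dl + U2 * W2) $$ (r,s) = Dl $$ (r,s) + (U2 $$ (r,0) * W2 $$ (0,s) + U2 $$ (r,1) * W2 $$ (1,s))"
        using r s Dlc U2c W2c by (simp only: e[symmetric], simp)
      have lhs: "(mu \<cdot>\<^sub>m 1\<^sub>m (k+1) + WU) $$ (r,s) = (if r = s then mu else 0) + WU $$ (r,s)"
        using r s unfolding WU_def by simp
      show ?thesis unfolding lhs rhs using r s
        by (auto simp: WU_def Dl_def U2_def W2_def dd_def mu_def)
    qed
  qed (insert Dlc U2c W2c, auto simp: WU_def)
  have step2: "det (mu \<cdot>\<^sub>m 1\<^sub>m (k+1) + WU) = det Dl * det (1\<^sub>m 2 + W2 * Bl * U2)"
    unfolding Teq by (rule sylvA[OF Dlc Blc DB U2c W2c])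
  have detD: "det Dl = (\<Prod>i=1..k. (lam + real (ns i) + 1))"
  proof -
    have "det Dl = (\<Prod>i<k+1. dd i)" unfolding Dl_def by (rule det_diag)
    also have "\<dots> = (\<Prod>i=1..k. dd i)" by (subst prod_shift1, simp add: dd_def)
    also have "\<dots> = (\<Prod>i=1..k. (lam + real (ns i) + 1))" unfolding dd_def mu_def
      by (intro prod.cong, auto)
    finally show ?thesis .
  qed
  define S where "S = (\<Sum>i=1..k. real (ns i) / (lam + real (ns i) + 1))"
  have WB: "(W2 * Bl) $$ (t,s) = W2 $$ (t,s) / dd s" if t: "t < 2" and s: "s < k+1" for t s
  proof -
    have "(W2 * Bl) $$ (t,s) = (\<Sum>j<k+1. W2 $$ (t,j) * Bl $$ (j,s))"
      using t s W2c Blc by (auto simp: scalar_prod_def atLeast0LessThan)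
    also have "\<dots> = (\<Sum>j<k+1. if j = s then W2 $$ (t,s) / dd s else 0)"
      using s unfolding Bl_def by (intro sum.cong, auto)
    also have "\<dots> = W2 $$ (t,s) / dd s" using s by simp
    finally show ?thesis .
  qed
  define P where "P = W2 * Bl"
  have Pc: "P \<in> carrier_mat 2 (k+1)" unfolding P_def using W2c Blc by auto
  have Q: "(W2 * Bl * U2) $$ (t,t') = (\<Sum>s<k+1. W2 $$ (t,s) / dd s * U2 $$ (s,t'))"
    if t: "t < 2" and t': "t' < 2" for t t'
  proof -
    have "(W2 * Bl * U2) $$ (t,t') = (P * U2) $$ (t,t')" unfolding P_def ..
    also have "\<dots> = (\<Sum>s<k+1. P $$ (t,s) * U2 $$ (s,t'))"
      using t t' Pc U2c by (auto simp: scalar_prod_def atLeast0LessThan)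
    also have "\<dots> = (\<Sum>s<k+1. W2 $$ (t,s) / dd s * U2 $$ (s,t'))"
      using WB t unfolding P_def by (intro sum.cong refl, simp)
    finally show ?thesis .
  qed
  note shift = sum_shift1 sum_shift1'
  have Qs: "(W2 * Bl * U2) $$ (t,t') = W2 $$ (t,0) / dd 0 * U2 $$ (0,t') + (\<Sum>i=1..k. W2 $$ (t,i) / dd i * U2 $$ (i,t'))"
    if t: "t \<le> 1" and t': "t' \<le> 1" for t t'
  proof -
    have "(W2 * Bl * U2) $$ (t,t') = (\<Sum>s<k+1. W2 $$ (t,s) / dd s * U2 $$ (s,t'))"
      by (rule Q, insert t t', auto)
    also have "\<dots> = W2 $$ (t,0) / dd 0 * U2 $$ (0,t') + (\<Sum>i=1..k. W2 $$ (t,i) / dd i * U2 $$ (i,t'))"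
      by (rule sum_shift1)
    finally show ?thesis .
  qed
  have q00: "(W2 * Bl * U2) $$ (0,0) = -1 - 2 * S"
  proof -
    have "(W2 * Bl * U2) $$ (0,0) = -1 + (\<Sum>i=1..k. -2 * (real (ns i) / (lam + real (ns i) + 1)))"
      unfolding Qs[OF le0 le0]
      by (auto simp: W2_def U2_def dd_def mu_def add_ac intro!: sum.cong)
    thus ?thesis unfolding S_def by (simp add: sum_distrib_left sum_negf)
  qed
  have q01: "(W2 * Bl * U2) $$ (0,1) = -1"
    unfolding Qs[OF le0 order_refl]
    by (auto simp: W2_def U2_def dd_def)
  have q10: "(W2 * Bl * U2) $$ (1,0) = lam + S"
    unfolding Qs[OF order_refl le0] S_def
    by (auto simp: W2_def U2_def dd_def mu_def add_ac intro!: sum.cong)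
  have q11: "(W2 * Bl * U2) $$ (1,1) = lam"
    unfolding Qs[OF order_refl order_refl]
    by (auto simp: W2_def U2_def dd_def)
  have QC: "W2 * Bl * U2 \<in> carrier_mat 2 2" using W2c Blc U2c by auto
  have det2v: "det (1\<^sub>m 2 + W2 * Bl * U2) = lam - (2 * lam + 1) * S"
  proof -
    define X where "X = W2 * Bl * U2"
    have Xc: "X \<in> carrier_mat 2 2" using QC unfolding X_def .
    have dr: "dim_row X = 2" "dim_col X = 2" using Xc by auto
    have ix: "(1\<^sub>m 2 + X) $$ (i,j) = (if i = j then 1 else 0) + X $$ (i,j)" if "i < 2" "j < 2" for i j
      using that dr by simp
    have "det (1\<^sub>m 2 + X) = (1\<^sub>m 2 + X) $$ (0,0) * (1\<^sub>m 2 + X) $$ (1,1) - (1\<^sub>m 2 + X) $$ (0,1) * (1\<^sub>m 2 + X) $$ (1,0)"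
      by (rule det2, insert Xc, auto)
    also have "\<dots> = (1 + X $$ (0,0)) * (1 + X $$ (1,1)) - X $$ (0,1) * X $$ (1,0)"
      by (simp add: ix)
    also have "\<dots> = lam - (2 * lam + 1) * S"
      unfolding X_def q00 q01 q10 q11 by (simp add: algebra_simps)
    finally show ?thesis unfolding X_def .
  qed
  have sumS: "(\<Sum>i=1..k. real (ns i) * (2 * lam + 1) / (lam + real (ns i) + 1)) = (2 * lam + 1) * S"
    unfolding S_def by (simp add: sum_distrib_left mult.commute)
  show ?thesis
    unfolding step1 step2 detD det2v sumS
    by (simp add: mu_def algebra_simps)
qed

end
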